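(* Let $A$ be a real $m\times n$ matrix with $r:=\operatorname{rank}(A)<n$ and let $k:=n-r$. Let $\beta\in\mathbb R_m$, $\varepsilon\ge0$, $F\in S(A,\beta,\varepsilon)$, and let $y\in\mathbb R_n$, $\delta\ge0$ with $\|Ay^T-\beta^T\|_\infty\le\delta$. Put $D:=(A^T)^\dagger$. Fix a basis $(x_1^T,\dots,x_k^T)$ of $\ker(A)$, let $x_{sj}$ be the $j$-th coordinate of $x_s$, and let $X:=(x_{sj})$ be the $k\times n$ matrix with rows $x_1,\dots,x_k$. Define $\pi_s(u):=u^{x_s}$ for $u\in\mathbb R_n^+$, and for $w\in\mathbb R_k^+$ define $$\psi(w):=\exp\big(X^\dagger\log(w)^T\big)\in\mathbb R_n^+,\qquad G(w):=F(\psi(w))/\psi(w)^y.$$ Let $M:=\max\{|x_{sj}|:1\le s\le k,\,1\le j\le n\}$ and let $K>1$. Then for every $v=(v_1,\dots,v_n)\in\mathbb R_n^+$ with $K^{-1}\le v_i\le K$ for all $i$, $$|F(v)-G(\pi_1(v),\dots,\pi_k(v))v^y|\le|F(v)|\Big((1+\varepsilon)K^{m\delta\|D\|(nM\|X^\dagger\|+1)}-1\Big).$$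
   Context: $\mathbb R_m$ denotes real row vectors of length $m$, $\mathbb R_m^+$ those with all entries strictly positive (similarly $\mathbb R_n^+,\mathbb R_k^+$). For $c\in\mathbb R_m^+$ and $\alpha\in\mathbb R_m$, $c^\alpha:=\prod_i c_i^{\alpha_i}$ (similarly $u^x$, $v^y$). For a row vector $w=(w_1,\dots,w_k)$ with positive entries, $\log(w):=(\log w_1,\dots,\log w_k)$ (natural logarithm), and for a column vector $z=(z_1,\dots,z_n)^T$, $\exp(z):=(e^{z_1},\dots,e^{z_n})$ (a row vector). For a real $m\times n$ matrix $A$ with columns $\alpha_1^T,\dots,\alpha_n^T$, $\beta\in\mathbb R_m$ and $\varepsilon\ge0$, $S(A,\beta,\varepsilon)$ is the set of all $F:\mathbb R_n^+\to\mathbb R$ with $$|F(v_1c^{\alpha_1},\dots,v_nc^{\alpha_n})-F(v_1,\dots,v_n)c^\beta|\le\varepsilon|F(v_1,\dots,v_n)|c^\beta$$ for all $v_1,\dots,v_n>0$ and all $c\in\mathbb R_m^+$. $B^\dagger$ is the Moore–Penrose pseudoinverse of a real matrix $B$; $\|\cdot\|_\infty$ is the maximum norm and $\|B\|=\max_i\sum_j|b_{ij}|$ the induced matrix norm. *)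

theory Defs
  imports "HOL-Analysis.Analysis"
begin

definition vpow :: "real^'a \<Rightarrow> real^'a \<Rightarrow> real" where
  "vpow c \<alpha> = (\<Prod>i\<in>UNIV. (c $ i) powr (\<alpha> $ i))"

definition pos_vec :: "real^'a \<Rightarrow> bool" where
  "pos_vec v \<longleftrightarrow> (\<forall>i. 0 < v $ i)"

definition S_class :: "real^'n^'m \<Rightarrow> real^'m \<Rightarrow> real \<Rightarrow> (real^'n \<Rightarrow> real) set" where
  "S_class A \<beta> \<epsilon> = {F. \<forall>v c. pos_vec v \<longrightarrow> pos_vec c \<longrightarrow>
      \<bar>F (\<chi> j. v $ j * vpow c (column j A)) - F v * vpow c \<beta>\<bar>
        \<le> \<epsilon> * \<bar>F v\<bar> * vpow c \<beta>}"

definition pinv :: "real^'n^'m \<Rightarrow> real^'m^'n" where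
  "pinv A = (THE B. A ** B ** A = A \<and> B ** A ** B = B \<and>
                    transpose (A ** B) = A ** B \<and> transpose (B ** A) = B ** A)"

definition maxnorm :: "real^'a \<Rightarrow> real" where
  "maxnorm x = Max (range (\<lambda>i. \<bar>x $ i\<bar>))"

text \<open>Induced (row-sum) matrix norm for the maximum norm.\<close>
definition mat_inf_norm :: "real^'n^'m \<Rightarrow> real" where
  "mat_inf_norm B = Max (range (\<lambda>i. \<Sum>j\<in>UNIV. \<bar>B $ i $ j\<bar>))"

end

theory Submission
  imports Defs
begin



lemma adjT: fixes C :: "real^'a^'b" shows "(transpose C *v a) \<bullet> b = a \<bullet> (C *v b)"
  by (simp only: transpose_matrix_vector dot_lmul_matrix)

declare transpose_matrix_vector[simp del] vector_transpose_matrix[simp del]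

lemma decomp_range:
  fixes C :: "real^'a^'b" and y :: "real^'b"
  shows "\<exists>x0 e. y = C *v x0 + e \<and> transpose C *v e = 0"
proof -
  obtain p e where p: "p \<in> span (range (\<lambda>u. C *v u))"
    and o: "\<And>w. w \<in> span (range (\<lambda>u. C *v u)) \<Longrightarrow> orthogonal e w" and y: "y = p + e"
    using orthogonal_subspace_decomp_exists[of "range (\<lambda>u. C *v u)" y] by blast
  have sub: "subspace (range (\<lambda>u. C *v u))"
    by (rule linear_subspace_image[OF matrix_vector_mul_linear subspace_UNIV])
  hence eqs: "span (range (\<lambda>u. C *v u)) = range (\<lambda>u. C *v u)" by (rule span_eq_iff[THEN iffD2])
  have "p \<in> range (\<lambda>u. C *v u)" using p unfolding eqs .
  then obtain x0 where x0: "p = C *v x0" by blast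
  have "e \<bullet> (C *v u) = 0" for u
    using o[of "C *v u"] by (simp add: span_base orthogonal_def)
  hence "(transpose C *v e) \<bullet> u = 0" for u by (simp add: adjT)
  hence "transpose C *v e = 0" using inner_eq_zero_iff by blast
  thus ?thesis using x0 y by blast
qed

lemma sym_from_inner:
  fixes M :: "real^'a^'a"
  assumes "\<And>x y. (M *v x) \<bullet> y = x \<bullet> (M *v y)"
  shows "transpose M = M"
proof -
  have "(transpose M *v y) = M *v y" for y
  proof -
    have "x \<bullet> (transpose M *v y) = x \<bullet> (M *v y)" for x
      using assms[of x y] adjT[where C=M and a=y and b=x] by (simp add: inner_commute)
    then have "(transpose M *v y - M *v y) \<bullet> (transpose M *v y - M *v y) = 0"
      by (simp add: inner_diff_right)
    then show ?thesis by simp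
  qed
  thus ?thesis by (simp add: matrix_eq)
qed



lemma pinv_unique:
  fixes A :: "real^'n^'m"
  assumes "A ** B ** A = A" "B ** A ** B = B" "transpose (A ** B) = A ** B" "transpose (B ** A) = B ** A"
      and "A ** C ** A = A" "C ** A ** C = C" "transpose (A ** C) = A ** C" "transpose (C ** A) = C ** A"
  shows "B = C"
proof -
  have "B = B ** (A ** B)" using assms(2) by (simp add: matrix_mul_assoc)
  also have "\<dots> = B ** transpose (A ** B)" using assms(3) by simp
  also have "\<dots> = B ** transpose (A ** C ** A ** B)" using assms(5) by simp
  also have "\<dots> = B ** (transpose (A ** B) ** transpose (A ** C))"
    by (simp add: matrix_transpose_mul matrix_mul_assoc)
  also have "\<dots> = B ** (A ** B) ** (A ** C)" using assms(3,7) by (simp add: matrix_mul_assoc)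
  also have "\<dots> = B ** A ** C" using assms(2) by (simp add: matrix_mul_assoc)
  finally have b: "B = B ** A ** C" .
  have "C = (C ** A) ** C" using assms(6) by (simp add: matrix_mul_assoc)
  also have "\<dots> = transpose (C ** A) ** C" using assms(8) by simp
  also have "\<dots> = transpose (C ** (A ** B ** A)) ** C" using assms(1) by simp
  also have "\<dots> = (transpose (B ** A) ** transpose (C ** A)) ** C"
    by (simp add: matrix_transpose_mul matrix_mul_assoc)
  also have "\<dots> = B ** A ** (C ** A ** C)" using assms(4,8) by (simp add: matrix_mul_assoc)
  also have "\<dots> = B ** A ** C" using assms(6) by simp
  finally show ?thesis using b by simp
qed



lemma pinv_exists:
  fixes A :: "real^'n^'m"
  shows "\<exists>B. A ** B ** A = A \<and> B ** A ** B = B \<and>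
                    transpose (A ** B) = A ** B \<and> transpose (B ** A) = B ** A"
proof -
  define W where "W = range (\<lambda>u. transpose A *v u)"
  define T where "T = transpose A ** A"
  have subW: "subspace W" unfolding W_def
    by (rule linear_subspace_image[OF matrix_vector_mul_linear subspace_UNIV])
  have Tv: "T *v v = transpose A *v (A *v v)" for v
    by (simp add: T_def matrix_vector_mul_assoc)
  have z: "w = 0" if wW: "w \<in> W" and Tw: "T *v w = 0" for w
  proof -
    obtain u where u: "w = transpose A *v u" using wW unfolding W_def by blast
    have "(A *v w) \<bullet> (A *v w) = w \<bullet> (T *v w)"
      using adjT[where C=A and a="A *v w" and b=w] by (simp add: Tv inner_commute)
    hence Aw: "A *v w = 0" using Tw by simp
    have "w \<bullet> w = u \<bullet> (A *v w)" using u adjT[where C=A and a=u and b=w] by simp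
    thus ?thesis using Aw by simp
  qed
  have inj: "inj_on (\<lambda>v. T *v v) W"
  proof (rule inj_onI)
    fix x x' assume "x \<in> W" "x' \<in> W" "T *v x = T *v x'"
    hence "x - x' \<in> W" "T *v (x - x') = 0"
      by (auto simp: subspace_diff[OF subW] matrix_vector_mult_diff_distrib)
    thus "x = x'" using z[of "x - x'"] by simp
  qed
  obtain h where hW: "h ` UNIV \<subseteq> W" and hl: "linear h" and hinv: "\<forall>v\<in>W. h (T *v v) = v"
    using linear_exists_left_inverse_on[OF matrix_vector_mul_linear subW inj] by blast
  define g where "g = (\<lambda>y. h (transpose A *v y))"
  have gl: "linear g" unfolding g_def
    using linear_compose[OF matrix_vector_mul_linear[of "transpose A"] hl] by (simp only: o_def)
  define B where "B = matrix g"
  have Bv: "B *v y = h (transpose A *v y)" for y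
    using fun_cong[OF matrix_vector_mul(2)[OF gl], of y] by (simp add: B_def g_def)
  have dx: "\<exists>w k. x = w + k \<and> w \<in> W \<and> A *v k = 0" for x
  proof -
    obtain x0 e where "x = transpose A *v x0 + e" "transpose (transpose A) *v e = 0"
      using decomp_range[where C="transpose A" and y=x] by blast
    hence "x = transpose A *v x0 + e \<and> transpose A *v x0 \<in> W \<and> A *v e = 0"
      by (simp add: W_def)
    thus ?thesis by blast
  qed
  have BAW: "B *v (A *v v) = v" if "v \<in> W" for v
    using hinv that by (simp add: Bv Tv)
  have BA: "B *v (A *v x) = w" if "x = w + k" "w \<in> W" "A *v k = 0" for x w k
    using BAW[OF that(2)] that by (simp add: matrix_vector_right_distrib)
  have dy: "\<exists>x0 e. y = A *v x0 + e \<and> transpose A *v e = 0" for y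
    using decomp_range[where C=A and y=y] by blast
  have AB: "A *v (B *v y) = A *v x0" if "y = A *v x0 + e" "transpose A *v e = 0" for y x0 e
  proof -
    obtain w k where wk: "x0 = w + k" "w \<in> W" "A *v k = 0" using dx by blast
    have "transpose A *v y = transpose A *v (A *v x0)"
      using that by (simp add: matrix_vector_right_distrib)
    hence "B *v y = B *v (A *v x0)" by (simp add: Bv)
    also have "\<dots> = w" using BA[OF wk] .
    finally show ?thesis using wk by (simp add: matrix_vector_right_distrib)
  qed
  have e1: "A ** B ** A = A"
  proof -
    have "(A ** B ** A) *v x = A *v x" for x
    proof -
      obtain w k where wk: "x = w + k" "w \<in> W" "A *v k = 0" using dx by blast
      show ?thesis using BA[OF wk] wk
        by (simp add: matrix_vector_mul_assoc[symmetric] matrix_vector_right_distrib)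
    qed
    thus ?thesis by (simp add: matrix_eq)
  qed
  have e2: "B ** A ** B = B"
  proof -
    have "(B ** A ** B) *v y = B *v y" for y
    proof -
      have "B *v y \<in> W" using hW by (auto simp: Bv)
      thus ?thesis using BAW by (simp add: matrix_vector_mul_assoc[symmetric])
    qed
    thus ?thesis by (simp add: matrix_eq)
  qed
  have e3: "transpose (A ** B) = A ** B"
  proof (rule sym_from_inner)
    fix y y'
    obtain x0 e where d: "y = A *v x0 + e" "transpose A *v e = 0" using dy by blast
    obtain x0' e' where d': "y' = A *v x0' + e'" "transpose A *v e' = 0" using dy by blast
    have o1: "(A *v x0) \<bullet> e' = 0" using adjT[where C=A and a="e'" and b=x0] d' by (simp add: inner_commute)
    have o2: "e \<bullet> (A *v x0') = 0" using adjT[where C=A and a=e and b="x0'"] d by simp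
    show "((A ** B) *v y) \<bullet> y' = y \<bullet> ((A ** B) *v y')"
      using AB[OF d] AB[OF d'] d d' o1 o2
      by (simp add: matrix_vector_mul_assoc[symmetric] inner_add_left inner_add_right)
  qed
  have e4: "transpose (B ** A) = B ** A"
  proof (rule sym_from_inner)
    fix x x'
    obtain w k where wk: "x = w + k" "w \<in> W" "A *v k = 0" using dx by blast
    obtain w' k' where wk': "x' = w' + k'" "w' \<in> W" "A *v k' = 0" using dx by blast
    have orth: "v \<bullet> kk = 0" if vW: "v \<in> W" and Ak: "A *v kk = 0" for v kk
    proof -
      obtain u where "v = transpose A *v u" using vW unfolding W_def by blast
      thus ?thesis using adjT[where C=A and a=u and b=kk] Ak by simp
    qed
    show "((B ** A) *v x) \<bullet> x' = x \<bullet> ((B ** A) *v x')"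
      using BA[OF wk] BA[OF wk'] wk wk' orth[of w k'] orth[of w' k]
      by (simp add: matrix_vector_mul_assoc[symmetric] inner_add_left inner_add_right inner_commute)
  qed
  show ?thesis using e1 e2 e3 e4 by blast
qed


lemma pinv_props:
  fixes A :: "real^'n^'m"
  shows "A ** pinv A ** A = A \<and> pinv A ** A ** pinv A = pinv A \<and>
         transpose (A ** pinv A) = A ** pinv A \<and> transpose (pinv A ** A) = pinv A ** A"
  unfolding pinv_def
  apply (rule theI')
  apply (rule ex_ex1I[OF pinv_exists])
  apply (elim conjE)
  apply (rule pinv_unique; assumption)
  done



lemma vpow_exp:
  assumes "pos_vec c" shows "vpow c a = exp (\<Sum>i\<in>UNIV. a$i * ln (c$i))"
proof -
  have "c$i \<noteq> 0" for i using assms unfolding pos_vec_def by (metis less_irrefl)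
  then show ?thesis by (simp add: vpow_def exp_sum powr_def)
qed

lemma row_sum_bound:
  fixes B :: "real^'a^'b"
  assumes "\<forall>j. \<bar>x$j\<bar> \<le> c"
  shows "\<bar>(B *v x)$i\<bar> \<le> mat_inf_norm B * c"
proof -
  have c0: "c \<ge> 0" using assms by (meson abs_ge_zero order_trans)
  have "\<bar>(B *v x)$i\<bar> = \<bar>\<Sum>j\<in>UNIV. B$i$j * x$j\<bar>" by (simp add: matrix_vector_mult_def)
  also have "\<dots> \<le> (\<Sum>j\<in>UNIV. \<bar>B$i$j\<bar> * c)"
    by (rule order_trans[OF sum_abs sum_mono]) (simp add: abs_mult assms mult_left_mono)
  also have "\<dots> = (\<Sum>j\<in>UNIV. \<bar>B$i$j\<bar>) * c" by (simp add: sum_distrib_right)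
  also have "\<dots> \<le> mat_inf_norm B * c"
    unfolding mat_inf_norm_def by (rule mult_right_mono[OF Max_ge c0]) auto
  finally show ?thesis .
qed

lemma maxnorm_ge: "\<bar>x$i\<bar> \<le> maxnorm x"
  unfolding maxnorm_def by (rule Max_ge) auto

lemma final_ineq:
  fixes Fv Fp b t Kp \<epsilon> :: real
  assumes b: "b > 0" and t: "t > 0" and eps: "\<epsilon> \<ge> 0"
    and h: "\<bar>Fp - Fv * b\<bar> \<le> \<epsilon> * \<bar>Fv\<bar> * b"
    and tK: "t \<le> Kp" and tK2: "inverse Kp \<le> t" and Kp: "Kp > 0"
  shows "\<bar>Fv - Fp * (t / b)\<bar> \<le> \<bar>Fv\<bar> * ((1 + \<epsilon>) * Kp - 1)"
proof -
  have eq: "Fv - Fp * (t / b) = Fv * (1 - t) - (Fp - Fv * b) * (t / b)"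
    using b by (simp add: field_simps)
  have e1: "\<bar>(Fp - Fv * b) * (t / b)\<bar> \<le> \<epsilon> * \<bar>Fv\<bar> * Kp"
  proof -
    have "\<bar>(Fp - Fv * b) * (t / b)\<bar> = \<bar>Fp - Fv * b\<bar> * (t / b)" using b t by (simp add: abs_mult)
    also have "\<dots> \<le> \<epsilon> * \<bar>Fv\<bar> * b * (t / b)" by (rule mult_right_mono[OF h]) (use b t in simp)
    also have "\<dots> = \<epsilon> * \<bar>Fv\<bar> * t" using b by simp
    also have "\<dots> \<le> \<epsilon> * \<bar>Fv\<bar> * Kp" using tK eps by (simp add: mult_left_mono)
    finally show ?thesis .
  qed
  have ik: "1 - inverse Kp \<le> Kp - 1"
  proof -
    have "0 \<le> (Kp - 1)^2 / Kp" using Kp by simp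
    also have "(Kp - 1)^2 / Kp = Kp - 2 + inverse Kp" using Kp by (simp add: field_simps power2_eq_square)
    finally show ?thesis by simp
  qed
  have a1: "\<bar>1 - t\<bar> \<le> Kp - 1" using tK tK2 ik by auto
  have e2: "\<bar>Fv * (1 - t)\<bar> \<le> \<bar>Fv\<bar> * (Kp - 1)" by (simp add: abs_mult a1 mult_left_mono)
  have "\<bar>Fv - Fp * (t / b)\<bar> \<le> \<bar>Fv\<bar> * (Kp - 1) + \<epsilon> * \<bar>Fv\<bar> * Kp"
    unfolding eq using e1 e2 by (smt (verit) abs_triangle_ineq4)
  also have "\<dots> = \<bar>Fv\<bar> * ((1 + \<epsilon>) * Kp - 1)" by (simp add: algebra_simps)
  finally show ?thesis .
qed

declare transpose_matrix_vector[simp del] vector_transpose_matrix[simp del]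

theorem theorem3p2:
  fixes A :: "real^'n^'m" and \<beta> :: "real^'m" and \<epsilon> \<delta> K :: real
    and F :: "real^'n \<Rightarrow> real" and y :: "real^'n" and X :: "real^'n^'k"
  assumes rank_lt: "rank A < CARD('n)"
    and k_def: "CARD('k) = CARD('n) - rank A"
    and eps: "\<epsilon> \<ge> 0"
    and FS: "F \<in> S_class A \<beta> \<epsilon>"
    and delta: "\<delta> \<ge> 0"
    and y_approx: "maxnorm (A *v y - \<beta>) \<le> \<delta>"
    and X_indep: "\<forall>c :: 'k \<Rightarrow> real. (\<Sum>s\<in>UNIV. c s *\<^sub>R row s X) = 0 \<longrightarrow> (\<forall>s. c s = 0)"
    and X_span: "span (rows X) = {x. A *v x = 0}"
    and K: "K > 1"
  shows "\<forall>v :: real^'n. (\<forall>i. inverse K \<le> v $ i \<and> v $ i \<le> K) \<longrightarrow>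
    (let D = pinv (transpose A);
         \<pi> = (\<lambda>u :: real^'n. \<chi> s :: 'k. vpow u (row s X));
         \<psi> = (\<lambda>w :: real^'k. \<chi> j :: 'n. exp ((pinv X *v (\<chi> s. ln (w $ s))) $ j));
         G = (\<lambda>w. F (\<psi> w) / vpow (\<psi> w) y);
         M = Max (range (\<lambda>(s, j). \<bar>X $ s $ j\<bar>));
         m = real CARD('m); n = real CARD('n)
     in \<bar>F v - G (\<pi> v) * vpow v y\<bar>
        \<le> \<bar>F v\<bar> * ((1 + \<epsilon>) * K powr (m * \<delta> * mat_inf_norm D * (n * M * mat_inf_norm (pinv X) + 1)) - 1))"
proof (intro allI impI)
  fix v :: "real^'n"
  assume vb: "\<forall>i. inverse K \<le> v $ i \<and> v $ i \<le> K"
  define D where "D = pinv (transpose A)"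
  define Xp where "Xp = pinv X"
  define M where "M = Max (range (\<lambda>(s, j). \<bar>X $ s $ j\<bar>))"
  define E where "E = real CARD('m) * \<delta> * mat_inf_norm D * (real CARD('n) * M * mat_inf_norm Xp + 1)"
  have K0: "K > 0" using K by simp
  have lnK: "ln K \<ge> 0" using K by simp
  have vpos: "0 < v$i" for i using vb K0 by (meson inverse_positive_iff_positive less_le_trans)
  have pv: "pos_vec v" using vpos by (simp add: pos_vec_def)
  define L where "L = (\<chi> j. ln (v$j))"
  have Lb: "\<bar>L$j\<bar> \<le> ln K" for j
  proof -
    have "ln (v$j) \<le> ln K" using vb vpos K0 by simp
    moreover have "ln (inverse K) \<le> ln (v$j)" using vb vpos K0 by simp
    ultimately show ?thesis using K0 by (simp add: L_def ln_inverse)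
  qed
  have piv: "(\<chi> s. ln (vpow v (row s X))) = X *v L"
    by (simp add: vec_eq_iff vpow_exp[OF pv] matrix_vector_mult_def L_def row_def mult.commute)
  define lp where "lp = Xp *v (X *v L)"
  define w where "w = L - lp"
  have Xw: "X *v w = 0"
  proof -
    have "X *v lp = (X ** Xp ** X) *v L" by (simp add: lp_def matrix_vector_mul_assoc matrix_mul_assoc)
    also have "\<dots> = X *v L" using pinv_props[of X] by (simp add: Xp_def)
    finally show ?thesis by (simp add: w_def matrix_vector_mult_diff_distrib)
  qed
  have wperp: "w \<bullet> e = 0" if Ae: "A *v e = 0" for e
  proof -
    have "e \<in> span (rows X)" using X_span Ae by simp
    moreover have "orthogonal w r" if rX: "r \<in> rows X" for r
    proof -
      obtain s where r: "r = row s X" using rX by (auto simp: rows_def)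
      have "r = X $ s" by (simp add: r row_def vec_eq_iff)
      hence "w \<bullet> r = (X *v w) $ s" by (simp add: matrix_vector_mul_component inner_commute)
      thus ?thesis using Xw by (simp add: orthogonal_def)
    qed
    ultimately show ?thesis using orthogonal_to_span by (auto simp: orthogonal_def)
  qed
  obtain x0 e where d: "w = transpose A *v x0 + e" "transpose (transpose A) *v e = 0"
    using decomp_range[where C="transpose A" and y=w] by blast
  have Ae: "A *v e = 0" using d(2) by simp
  have "e \<bullet> e = 0"
  proof -
    have "(transpose A *v x0) \<bullet> e = 0" using adjT[where C=A and a=x0 and b=e] Ae by simp
    hence "e \<bullet> e = w \<bullet> e" using d(1) by (simp add: inner_add_left)
    thus ?thesis using wperp[OF Ae] by simp
  qed
  hence "e = 0" by simp
  hence wA: "w = transpose A *v x0" using d(1) by simp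
  define z where "z = D *v w"
  have Atz: "transpose A *v z = w"
  proof -
    have "transpose A *v z = (transpose A ** D ** transpose A) *v x0"
      by (simp add: z_def wA matrix_vector_mul_assoc matrix_mul_assoc)
    also have "\<dots> = w" using pinv_props[of "transpose A"] by (simp add: D_def wA)
    finally show ?thesis .
  qed
  have Atz': "w $ j = (\<Sum>i\<in>UNIV. A$i$j * z$i)" for j
    using Atz[symmetric] by (simp add: matrix_vector_mult_def transpose_def)
  have M0: "\<bar>X$s$j\<bar> \<le> M" for s j
    unfolding M_def by (rule Max_ge) auto
  have Mnn: "M \<ge> 0" using M0 by (meson abs_ge_zero order_trans)
  have XLb: "\<bar>(X *v L)$s\<bar> \<le> real CARD('n) * M * ln K" for s
  proof -
    have "\<bar>(X *v L)$s\<bar> = \<bar>\<Sum>j\<in>UNIV. X$s$j * L$j\<bar>" by (simp add: matrix_vector_mult_def)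
    also have "\<dots> \<le> (\<Sum>j\<in>UNIV. \<bar>X$s$j * L$j\<bar>)" by (rule sum_abs)
    also have "\<dots> \<le> (\<Sum>j::'n\<in>UNIV. M * ln K)"
      by (intro sum_mono) (simp only: abs_mult, rule mult_mono[OF M0 Lb Mnn abs_ge_zero])
    also have "\<dots> = real CARD('n) * M * ln K" by simp
    finally show ?thesis .
  qed
  have lpb: "\<bar>lp$j\<bar> \<le> mat_inf_norm Xp * (real CARD('n) * M * ln K)" for j
    unfolding lp_def by (rule row_sum_bound) (simp add: XLb)
  have wb: "\<bar>w$j\<bar> \<le> ln K * (real CARD('n) * M * mat_inf_norm Xp + 1)" for j
  proof -
    have "\<bar>w$j\<bar> \<le> \<bar>L$j\<bar> + \<bar>lp$j\<bar>" by (simp add: w_def abs_triangle_ineq4)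
    also have "\<dots> \<le> ln K + mat_inf_norm Xp * (real CARD('n) * M * ln K)" using Lb lpb add_mono by blast
    also have "\<dots> = ln K * (real CARD('n) * M * mat_inf_norm Xp + 1)" by (simp add: algebra_simps)
    finally show ?thesis .
  qed
  have zb: "\<bar>z$i\<bar> \<le> mat_inf_norm D * (ln K * (real CARD('n) * M * mat_inf_norm Xp + 1))" for i
    unfolding z_def by (rule row_sum_bound) (simp add: wb)
  define a where "a = (A *v y - \<beta>) \<bullet> z"
  have ab: "\<bar>a\<bar> \<le> E * ln K"
  proof -
    let ?Z = "mat_inf_norm D * (ln K * (real CARD('n) * M * mat_inf_norm Xp + 1))"
    have "\<bar>a\<bar> = \<bar>\<Sum>i\<in>UNIV. (A *v y - \<beta>)$i * z$i\<bar>" by (simp add: a_def inner_vec_def)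
    also have "\<dots> \<le> (\<Sum>i\<in>UNIV. \<bar>(A *v y - \<beta>)$i * z$i\<bar>)" by (rule sum_abs)
    also have "\<dots> \<le> (\<Sum>i::'m\<in>UNIV. \<delta> * ?Z)"
      by (intro sum_mono) (simp only: abs_mult, rule mult_mono[OF order_trans[OF maxnorm_ge y_approx] zb delta abs_ge_zero])
    also have "\<dots> = E * ln K" by (simp add: E_def algebra_simps)
    finally show ?thesis .
  qed
  define c where "c = (\<chi> i. exp (- (z$i)))"
  have pc: "pos_vec c" by (simp add: pos_vec_def c_def)
  define \<psi>0 where "\<psi>0 = (\<chi> j. exp ((pinv X *v (\<chi> s. ln (vpow v (row s X)))) $ j))"
  have psi0: "\<psi>0 = (\<chi> j. exp (lp $ j))" by (simp add: \<psi>0_def piv lp_def Xp_def)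
  have vc: "(\<chi> j. v $ j * vpow c (column j A)) = \<psi>0"
  proof -
    have "v $ j * vpow c (column j A) = exp (lp $ j)" for j
    proof -
      have "vpow c (column j A) = exp (- (w $ j))"
        unfolding vpow_exp[OF pc] by (simp add: c_def column_def Atz' sum_negf)
      moreover have "v $ j = exp (L $ j)" using vpos by (simp add: L_def)
      ultimately show ?thesis by (simp add: w_def flip: exp_add)
    qed
    thus ?thesis by (simp add: psi0 vec_eq_iff)
  qed
  have cb: "vpow c \<beta> = exp (- (\<beta> \<bullet> z))"
    unfolding vpow_exp[OF pc] by (simp add: c_def inner_vec_def sum_negf)
  have FSv: "\<bar>F \<psi>0 - F v * exp (- (\<beta> \<bullet> z))\<bar> \<le> \<epsilon> * \<bar>F v\<bar> * exp (- (\<beta> \<bullet> z))"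
  proof -
    have "\<bar>F (\<chi> j. v $ j * vpow c (column j A)) - F v * vpow c \<beta>\<bar> \<le> \<epsilon> * \<bar>F v\<bar> * vpow c \<beta>"
      using FS pv pc unfolding S_class_def by blast
    thus ?thesis unfolding vc cb .
  qed
  have ppos: "pos_vec \<psi>0" by (simp add: psi0 pos_vec_def)
  have vy: "F \<psi>0 / vpow \<psi>0 y * vpow v y = F \<psi>0 * (exp a / exp (- (\<beta> \<bullet> z)))"
  proof -
    have "vpow \<psi>0 y = exp (y \<bullet> lp)" unfolding vpow_exp[OF ppos] by (simp add: psi0 inner_vec_def)
    moreover have "vpow v y = exp (y \<bullet> L)" unfolding vpow_exp[OF pv] by (simp add: L_def inner_vec_def)
    moreover have "y \<bullet> L - y \<bullet> lp = a - (- (\<beta> \<bullet> z))"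
    proof -
      have "y \<bullet> L - y \<bullet> lp = y \<bullet> w" by (simp add: w_def inner_diff_right)
      also have "\<dots> = (A *v y) \<bullet> z" using adjT[where C=A and a=z and b=y] Atz by (simp add: inner_commute)
      finally show ?thesis by (simp add: a_def inner_diff_left)
    qed
    ultimately show ?thesis
      by (simp add: exp_diff[symmetric] field_simps flip: exp_add)
  qed
  have KE: "K powr E = exp (E * ln K)" using K0 by (simp add: powr_def)
  have main: "\<bar>F v - F \<psi>0 / vpow \<psi>0 y * vpow v y\<bar> \<le> \<bar>F v\<bar> * ((1 + \<epsilon>) * K powr E - 1)"
    unfolding vy
  proof (rule final_ineq[OF _ _ eps FSv])
    show "exp a \<le> K powr E" using ab by (simp add: KE)
    show "inverse (K powr E) \<le> exp a" using ab by (simp add: KE flip: exp_minus)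
  qed (use K0 in auto)
  show "let D = pinv (transpose A);
         \<pi> = (\<lambda>u :: real^'n. \<chi> s :: 'k. vpow u (row s X));
         \<psi> = (\<lambda>w :: real^'k. \<chi> j :: 'n. exp ((pinv X *v (\<chi> s. ln (w $ s))) $ j));
         G = (\<lambda>w. F (\<psi> w) / vpow (\<psi> w) y);
         M = Max (range (\<lambda>(s, j). \<bar>X $ s $ j\<bar>));
         m = real CARD('m); n = real CARD('n)
     in \<bar>F v - G (\<pi> v) * vpow v y\<bar>
        \<le> \<bar>F v\<bar> * ((1 + \<epsilon>) * K powr (m * \<delta> * mat_inf_norm D * (n * M * mat_inf_norm (pinv X) + 1)) - 1)"
    using main unfolding Let_def E_def D_def M_def Xp_def \<psi>0_def by simp
qed


end
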